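(* Let $p\ge1$, $m=2p$, $j=\mathrm{diag}(I_p,-I_p)$, $n>0$. Let $A$ be an $n\times n$ matrix with $\det A\neq0$, $S_0$ an $n\times n$ matrix and $\Pi_0$ an $n\times m$ matrix with $AS_0-S_0A^*=i\Pi_0j\Pi_0^*$. Define for $k\ge0$ $$\Pi_{k+1}=\Pi_k+iA^{-1}\Pi_kj,\qquad S_{k+1}=S_k+A^{-1}S_k(A^* )^{-1}+A^{-1}\Pi_k\Pi_k^*(A^* )^{-1}.$$ If $S_0>0$, then $S_k>0$ for all $k\ge0$ and $C_k:=I_m+\Pi_k^*S_k^{-1}\Pi_k-\Pi_{k+1}^*S_{k+1}^{-1}\Pi_{k+1}>0$ for all $k\ge0$.
   Context: $I_r$ denotes the $r\times r$ identity matrix; $>0$ means positive definite. *)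

theory Defs
  imports "HOL-Analysis.Analysis"
begin

definition cadj :: "complex^'n^'m \<Rightarrow> complex^'m^'n" where
  "cadj M = (\<chi> i k. cnj (M $ k $ i))"

definition cscale :: "complex \<Rightarrow> complex^'n^'m \<Rightarrow> complex^'n^'m" where
  "cscale c M = (\<chi> i k. c * M $ i $ k)"

definition pos_def :: "complex^'n^'n \<Rightarrow> bool" where
  "pos_def S \<longleftrightarrow> cadj S = S \<and>
     (\<forall>x::complex^'n. x \<noteq> 0 \<longrightarrow> 0 < Re (\<Sum>i\<in>UNIV. \<Sum>k\<in>UNIV. cnj (x $ i) * S $ i $ k * x $ k))"

text \<open>j = diag(I_p, -I_p), indices of the m = 2p block split as 'p + 'p.\<close>
definition jmat :: "complex^('p::finite + 'p)^('p + 'p)" where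
  "jmat = (\<chi> a b. if a = b then (case a of Inl _ \<Rightarrow> 1 | Inr _ \<Rightarrow> -1) else 0)"

end

theory Submission
  imports Defs
begin

definition hip :: "complex^'n \<Rightarrow> complex^'n \<Rightarrow> complex" where
  "hip x y = (\<Sum>i\<in>UNIV. cnj (x$i) * y$i)"

lemma hip_add_left: "hip (x + y) z = hip x z + hip y z"
  by (simp add: hip_def sum.distrib distrib_right)
lemma hip_add_right: "hip z (x + y) = hip z x + hip z y"
  by (simp add: hip_def sum.distrib distrib_left)
lemma hip_diff_left: "hip (x - y) z = hip x z - hip y z"
  by (simp add: hip_def sum_subtractf left_diff_distrib)
lemma hip_diff_right: "hip z (x - y) = hip z x - hip z y"
  by (simp add: hip_def sum_subtractf right_diff_distrib)
lemma hip_minus_left: "hip (- x) z = - hip x z"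
  by (simp add: hip_def sum_negf)
lemma hip_minus_right: "hip z (- x) = - hip z x"
  by (simp add: hip_def sum_negf)
lemma hip_scale_left: "hip (c *s x) z = cnj c * hip x z"
  by (simp add: hip_def sum_distrib_left mult.assoc)
lemma hip_scale_right: "hip z (c *s x) = c * hip z x"
  by (simp add: hip_def sum_distrib_left mult.left_commute)
lemma hip_zero_left[simp]: "hip 0 z = 0" by (simp add: hip_def)

lemma hip_adj: "hip x (M *v y) = hip (cadj M *v x) y"
proof -
  have "hip x (M *v y) = (\<Sum>i\<in>UNIV. \<Sum>k\<in>UNIV. cnj (x$i) * M$i$k * y$k)"
    by (simp add: hip_def matrix_vector_mult_def sum_distrib_left mult.assoc)
  also have "\<dots> = (\<Sum>k\<in>UNIV. \<Sum>i\<in>UNIV. cnj (x$i) * M$i$k * y$k)"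
    by (rule sum.swap)
  also have "\<dots> = hip (cadj M *v x) y"
    by (simp add: hip_def matrix_vector_mult_def cadj_def sum_distrib_left sum_distrib_right mult.commute mult.left_commute)
  finally show ?thesis .
qed

lemma cadj_cadj[simp]: "cadj (cadj M) = M"
  by (simp add: cadj_def vec_eq_iff)

lemma hip_adj2: "hip (M *v x) y = hip x (cadj M *v y)"
  by (simp add: hip_adj)

lemma qf: "(\<Sum>i\<in>UNIV. \<Sum>k\<in>UNIV. cnj (x $ i) * S $ i $ k * x $ k) = hip x (S *v x)"
  by (simp add: hip_def matrix_vector_mult_def sum_distrib_left mult.assoc)

lemma hip_self_ge: "Re (hip x x) \<ge> 0"
proof -
  have "Re (hip x x) = (\<Sum>i\<in>UNIV. (cmod (x$i))^2)"
    by (simp add: hip_def cmod_power2 flip: power2_eq_square)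
  thus ?thesis by (simp add: sum_nonneg)
qed

lemma hip_self_gt: assumes "x \<noteq> 0" shows "Re (hip x x) > 0"
proof -
  obtain j where j: "x$j \<noteq> 0" using assms by (metis vec_eq_iff zero_index)
  have "Re (hip x x) = (\<Sum>i\<in>UNIV. (cmod (x$i))^2)"
    by (simp add: hip_def cmod_power2 flip: power2_eq_square)
  also have "\<dots> > 0"
    by (rule sum_pos2[where i=j]) (use j in auto)
  finally show ?thesis .
qed

lemma cadj_add: "cadj (M + N) = cadj M + cadj N"
  by (simp add: cadj_def vec_eq_iff)
lemma cadj_diff: "cadj (M - N) = cadj M - cadj N"
  by (simp add: cadj_def vec_eq_iff)
lemma cadj_mult: "cadj (M ** N) = cadj N ** cadj M"
  by (simp add: cadj_def vec_eq_iff matrix_matrix_mult_def mult.commute)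
lemma cadj_mat1: "cadj (mat 1 :: complex^'n^'n) = mat 1"
  by (simp add: cadj_def vec_eq_iff mat_def)
lemma cscale_mv: "cscale c M *v x = c *s (M *v x)"
  by (simp add: cscale_def vec_eq_iff matrix_vector_mult_def sum_distrib_left mult.assoc)
lemma cadj_cscale: "cadj (cscale c M) = cscale (cnj c) (cadj M)"
  by (simp add: cadj_def cscale_def vec_eq_iff)

lemma cadj_jmat: "cadj jmat = jmat"
  by (auto simp: cadj_def jmat_def vec_eq_iff split: sum.split)
lemma jmat_sq: "(jmat::complex^('p::finite+'p)^('p+'p)) ** jmat = mat 1"
proof -
  have "\<And>i l. (\<Sum>k\<in>UNIV. (jmat::complex^('p::finite+'p)^('p+'p))$i$k * jmat$k$l) = jmat$i$i * jmat$i$l"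
    by (subst sum.remove[of _ i]) (auto simp: jmat_def intro!: sum.neutral)
  moreover have "\<And>i l. (jmat::complex^('p::finite+'p)^('p+'p))$i$i * jmat$i$l = (mat 1 :: complex^('p::finite+'p)^('p+'p))$i$l"
    by (auto simp: mat_def jmat_def split: sum.split)
  ultimately show ?thesis
    by (simp add: matrix_matrix_mult_def vec_eq_iff)
qed

lemma matrix_inv_eq:
  fixes A X :: "'a::field^'n^'n"
  assumes "A ** X = mat 1" shows "matrix_inv A = X"
proof -
  have XA: "X ** A = mat 1" using assms matrix_left_right_inverse by blast
  have "A ** matrix_inv A = mat 1 \<and> matrix_inv A ** A = mat 1"
    unfolding matrix_inv_def by (rule someI[of _ X]) (use assms XA in auto)
  then have "matrix_inv A ** A = mat 1" by blast
  then have "matrix_inv A ** A ** X = X" by simp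
  thus ?thesis by (simp add: assms flip: matrix_mul_assoc)
qed

lemma pos_def_gt: "pos_def S \<Longrightarrow> x \<noteq> 0 \<Longrightarrow> Re (hip x (S *v x)) > 0"
  unfolding pos_def_def qf by blast
lemma pos_def_ge: "pos_def S \<Longrightarrow> Re (hip x (S *v x)) \<ge> 0"
  by (cases "x = 0") (auto dest: pos_def_gt[of S x] simp: less_imp_le)
lemma pos_def_herm: "pos_def S \<Longrightarrow> cadj S = S"
  unfolding pos_def_def by blast

lemma pos_def_intro: "cadj S = S \<Longrightarrow> (\<And>x. x \<noteq> 0 \<Longrightarrow> Re (hip x (S *v x)) > 0) \<Longrightarrow> pos_def S"
  unfolding pos_def_def qf by blast

lemma pos_def_inv:
  assumes "pos_def S"
  shows "S ** matrix_inv S = mat 1" "matrix_inv S ** S = mat 1" "cadj (matrix_inv S) = matrix_inv S"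
proof -
  have "inj ((*v) S)"
  proof (rule injI)
    fix x y assume "S *v x = S *v y"
    then have "S *v (x - y) = 0" by (simp add: matrix_vector_mult_diff_distrib)
    then have "hip (x - y) (S *v (x - y)) = 0" by (simp add: hip_def)
    then show "x = y" using pos_def_gt[OF assms, of "x - y"] by fastforce
  qed
  then obtain B where B: "B ** S = mat 1" using matrix_left_invertible_injective by blast
  then have SB: "S ** B = mat 1" using matrix_left_right_inverse by blast
  then have inv: "matrix_inv S = B" by (rule matrix_inv_eq)
  show "S ** matrix_inv S = mat 1" "matrix_inv S ** S = mat 1" using inv B SB by auto
  have "cadj (B ** S) = mat 1" using B cadj_mat1 by simp
  then have "S ** cadj B = mat 1" using pos_def_herm[OF assms] by (simp add: cadj_mult)
  then show "cadj (matrix_inv S) = matrix_inv S" using inv matrix_inv_eq by metis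
qed

lemma mv_neg: "(M::complex^'n^'m) *v (- x) = - (M *v x)"
  by (simp add: matrix_vector_mult_def vec_eq_iff sum_negf)

lemma quad_split:
  fixes S B :: "complex^'n^'n" and P :: "complex^'m^'n"
  assumes "cadj S = S"
  shows "hip x ((S + B ** S ** cadj B + B ** P ** cadj P ** cadj B) *v x)
     = hip x (S *v x) + hip (cadj B *v x) (S *v (cadj B *v x))
       + hip (cadj P *v (cadj B *v x)) (cadj P *v (cadj B *v x))"
proof -
  define w where "w = cadj B *v x"
  have 1: "hip x (B *v (S *v w)) = hip w (S *v w)" by (simp add: w_def hip_adj[of x B])
  have 2: "hip x (B *v (P *v (cadj P *v w))) = hip (cadj P *v w) (cadj P *v w)"
    by (simp add: w_def hip_adj[of x B] hip_adj[of _ P])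
  show ?thesis
    by (simp add: matrix_vector_mult_add_rdistrib hip_add_right 1 2 flip: w_def matrix_vector_mul_assoc)
qed

lemma step_pos:
  fixes S B :: "complex^'n^'n" and P :: "complex^'m^'n"
  assumes S: "pos_def S"
  shows "pos_def (S + B ** S ** cadj B + B ** P ** cadj P ** cadj B)"
proof (rule pos_def_intro)
  have h: "cadj S = S" using assms pos_def_herm by blast
  show "cadj (S + B ** S ** cadj B + B ** P ** cadj P ** cadj B) = S + B ** S ** cadj B + B ** P ** cadj P ** cadj B"
    by (simp add: cadj_add cadj_mult h matrix_mul_assoc)
  fix x :: "complex^'n" assume x: "x \<noteq> 0"
  have a: "Re (hip x (S *v x)) > 0" using pos_def_gt[OF S x] .
  have b: "Re (hip (cadj B *v x) (S *v (cadj B *v x))) \<ge> 0" using pos_def_ge[OF S] .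
  have c: "Re (hip (cadj P *v (cadj B *v x)) (cadj P *v (cadj B *v x))) \<ge> 0" using hip_self_ge .
  show "Re (hip x ((S + B ** S ** cadj B + B ** P ** cadj P ** cadj B) *v x)) > 0"
    unfolding quad_split[OF h] using a b c by simp
qed

lemma C_pos:
  fixes S S' B :: "complex^'n^'n" and P P' :: "complex^'m^'n" and J :: "complex^'m^'m"
  assumes S: "pos_def S" and S': "pos_def S'"
   and S'def: "S' = S + B ** S ** cadj B + B ** P ** cadj P ** cadj B"
   and P'def: "P' = P + cscale \<i> (B ** P ** J)"
   and J1: "cadj J = J" and J2: "J ** J = mat 1"
  shows "pos_def (mat 1 + cadj P ** matrix_inv S ** P - cadj P' ** matrix_inv S' ** P')"
proof (rule pos_def_intro)
  define Si where "Si = matrix_inv S"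
  define Si' where "Si' = matrix_inv S'"
  have hS: "cadj S = S" using S pos_def_herm by blast
  have Si1: "S ** Si = mat 1" "Si ** S = mat 1" "cadj Si = Si" using pos_def_inv[OF S] by (auto simp: Si_def)
  have Si'1: "S' ** Si' = mat 1" "Si' ** S' = mat 1" "cadj Si' = Si'" using pos_def_inv[OF S'] by (auto simp: Si'_def)
  show "cadj (mat 1 + cadj P ** matrix_inv S ** P - cadj P' ** matrix_inv S' ** P') = mat 1 + cadj P ** matrix_inv S ** P - cadj P' ** matrix_inv S' ** P'"
    using Si1(3) Si'1(3) by (simp add: Si_def Si'_def cadj_add cadj_diff cadj_mult cadj_mat1 matrix_mul_assoc)
  fix y :: "complex^'m" assume y: "y \<noteq> 0"
  define a where "a = P *v y"
  define v where "v = P' *v y"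
  define x where "x = - (Si' *v v)"
  define w where "w = cadj B *v x"
  define g where "g = B *v (P *v (J *v y))"
  define z where "z = S *v x + a"
  define t where "t = cadj P *v w + \<i> *s (J *v y)"
  have Q0: "hip y ((mat 1 + cadj P ** matrix_inv S ** P - cadj P' ** matrix_inv S' ** P') *v y)
      = hip y y + hip a (Si *v a) - hip v (Si' *v v)"
    by (simp add: matrix_vector_mult_add_rdistrib matrix_vector_mult_diff_rdistrib hip_add_right hip_diff_right
         hip_adj[of y "cadj P"] hip_adj[of y "cadj P'"] a_def v_def Si_def Si'_def flip: matrix_vector_mul_assoc)
  have V: "v = a + \<i> *s g"
    by (simp add: v_def a_def g_def P'def matrix_vector_mult_add_rdistrib cscale_mv matrix_vector_mul_assoc matrix_mul_assoc)
  have F1: "S' *v x = - v"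
    by (simp add: x_def mv_neg matrix_vector_mul_assoc Si'1)
  have HS: "hip x (S' *v x) = hip x (S *v x) + hip w (S *v w) + hip (cadj P *v w) (cadj P *v w)"
    unfolding S'def quad_split[OF hS] w_def ..
  have F2: "hip x v = - hip v (Si' *v v)"
    by (simp add: x_def hip_minus_left hip_adj2 Si'1)
  have F4: "hip x (S' *v x) = hip v (Si' *v v)"
    by (simp add: F1 hip_minus_right F2)
  have F3: "hip v x = - hip v (Si' *v v)"
    by (simp add: x_def hip_minus_right)
  have SiSx: "Si *v (S *v x) = x" by (simp add: matrix_vector_mul_assoc Si1)
  have SSia: "S *v (Si *v a) = a" by (simp add: matrix_vector_mul_assoc Si1)
  have Z: "hip z (Si *v z) = hip x (S *v x) + hip x a + hip a x + hip a (Si *v a)"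
    by (simp add: z_def matrix_vector_right_distrib SiSx hip_add_left hip_add_right hip_adj2[of S] hS SSia)
  have T1: "hip (cadj P *v w) (J *v y) = hip x g"
    by (simp add: hip_adj2 w_def g_def)
  have T2: "hip (J *v y) (cadj P *v w) = hip g x"
    by (simp add: hip_adj2 w_def g_def)
  have T3: "hip (J *v y) (J *v y) = hip y y"
    by (simp add: hip_adj2 J1 matrix_vector_mul_assoc J2)
  have T: "hip t t = hip (cadj P *v w) (cadj P *v w) + \<i> * hip x g - \<i> * hip g x + hip y y"
    by (simp add: t_def hip_add_left hip_add_right hip_scale_left hip_scale_right T1 T2 T3 right_diff_distrib)
  have V2: "hip x v = hip x a + \<i> * hip x g" "hip v x = hip a x - \<i> * hip g x"
    by (simp_all add: V hip_add_left hip_add_right hip_scale_left hip_scale_right)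
  have key: "hip y ((mat 1 + cadj P ** matrix_inv S ** P - cadj P' ** matrix_inv S' ** P') *v y)
     = hip z (Si *v z) + hip w (S *v w) + hip t t"
  proof -
    have "hip z (Si *v z) + hip w (S *v w) + hip t t
        = hip x (S' *v x) + hip x v + hip v x + hip a (Si *v a) + hip y y"
      unfolding Z T HS V2 by (simp add: algebra_simps)
    also have "\<dots> = hip y y + hip a (Si *v a) - hip v (Si' *v v)"
      unfolding F4 F2 F3 by (simp add: algebra_simps)
    finally show ?thesis unfolding Q0 by simp
  qed
  have r1: "Re (hip z (Si *v z)) \<ge> 0"
  proof -
    have "hip z (Si *v z) = hip (Si *v z) (S *v (Si *v z))"
      by (simp add: matrix_vector_mul_assoc Si1 hip_adj2[of Si])
    thus ?thesis using pos_def_ge[OF S] by simp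
  qed
  have r2: "Re (hip w (S *v w)) \<ge> 0" using pos_def_ge[OF S] .
  have r3: "Re (hip t t) \<ge> 0" using hip_self_ge .
  have "Re (hip w (S *v w)) > 0 \<or> Re (hip t t) > 0"
  proof (cases "w = 0")
    case False thus ?thesis using pos_def_gt[OF S] by blast
  next
    case True
    have "t \<noteq> 0"
    proof
      assume "t = 0"
      then have "\<i> *s (J *v y) = 0" using True by (simp add: t_def)
      then have "J *v y = 0" by (simp add: vec_eq_iff)
      then have "J *v (J *v y) = 0" by simp
      then show False using y by (simp add: matrix_vector_mul_assoc J2)
    qed
    thus ?thesis using hip_self_gt by blast
  qed
  then show "Re (hip y ((mat 1 + cadj P ** matrix_inv S ** P - cadj P' ** matrix_inv S' ** P') *v y)) > 0"
    unfolding key using r1 r2 r3 by auto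
qed

theorem proposition3p1:
  fixes A :: "complex^'n^'n"
    and S :: "nat \<Rightarrow> complex^'n^'n"
    and Pi :: "nat \<Rightarrow> complex^('p::finite + 'p)^'n"
  assumes detA: "det A \<noteq> 0"
    and identity: "A ** S 0 - S 0 ** cadj A = cscale \<i> (Pi 0 ** jmat ** cadj (Pi 0))"
    and Pi_rec: "\<And>k. Pi (Suc k) = Pi k + cscale \<i> (matrix_inv A ** Pi k ** jmat)"
    and S_rec: "\<And>k. S (Suc k) = S k + matrix_inv A ** S k ** matrix_inv (cadj A)
                   + matrix_inv A ** Pi k ** cadj (Pi k) ** matrix_inv (cadj A)"
    and S0pos: "pos_def (S 0)"
  shows "\<forall>k. pos_def (S k) \<and>
           pos_def (mat 1 + cadj (Pi k) ** matrix_inv (S k) ** Pi k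
                    - cadj (Pi (Suc k)) ** matrix_inv (S (Suc k)) ** Pi (Suc k))"
proof -
  define B where "B = matrix_inv A"
  have "invertible A" using detA invertible_det_nz by blast
  then obtain X where X: "A ** X = mat 1" "X ** A = mat 1" unfolding invertible_def by blast
  have BX: "B = X" unfolding B_def by (rule matrix_inv_eq[OF X(1)])
  have "cadj (X ** A) = mat 1" using X(2) cadj_mat1 by simp
  then have "cadj A ** cadj X = mat 1" by (simp add: cadj_mult)
  then have Bs: "matrix_inv (cadj A) = cadj B" using BX matrix_inv_eq by metis
  have Srec: "\<And>k. S (Suc k) = S k + B ** S k ** cadj B + B ** Pi k ** cadj (Pi k) ** cadj B"
    using S_rec unfolding Bs B_def by simp
  have Sp: "pos_def (S k)" for k
  proof (induction k)
    case 0 show ?case using S0pos .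
  next
    case (Suc k) show ?case unfolding Srec using step_pos[OF Suc] .
  qed
  show ?thesis
  proof
    fix k
    show "pos_def (S k) \<and>
           pos_def (mat 1 + cadj (Pi k) ** matrix_inv (S k) ** Pi k
                    - cadj (Pi (Suc k)) ** matrix_inv (S (Suc k)) ** Pi (Suc k))"
      using Sp[of k] C_pos[OF Sp[of k] Sp[of "Suc k"] Srec[of k], of "Pi (Suc k)" jmat]
        Pi_rec[of k] cadj_jmat jmat_sq unfolding B_def by blast
  qed
qed

end
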